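(* Let $L$ be a positive integer and let $\{a_i(k)\}_{i\in\mathbb Z_L}$, $k\in\mathcal K=\mathbb Z_L$, be binary sequences. Let $2\le s\le S$ be integers and $W(s)\ge0$ such that for all distinct keys $k_1,\ldots,k_s\in\mathcal K$ and all bits $b_1,\ldots,b_s$, $|A_{b_1\ldots b_s}(k_1,\ldots,k_s)|\le L/2^s+W(s)$. Let $0<\gamma<1$ with $\gamma L$ an integer, $L'=L+2^sW(s)$, $\gamma'=\gamma L/L'$. Let $\nu^*_{\rm correct}$ be the optimal value of the linear program in the variables $\nu_0,\ldots,\nu_S\ge0$ subject to $\nu_t=\nu_{S-t}$ for all $t$: $$\text{maximize } \sum_{t=0}^{\lfloor S/2\rfloor}\binom{S-1}{t}\nu_t+\sum_{t=\lfloor S/2\rfloor+1}^{S}\binom{S-1}{t-1}\nu_t$$ $$\text{subject to } \sum_{t=0}^{S}\binom{S}{t}\nu_t=\gamma',\qquad \sum_{t=0}^{S-s}\binom{S-s}{t}\nu_{h+t}\le 2^{-s}\ \ (h=0,\ldots,s).$$ Then for every $T\subset\mathbb Z_L$ with $|T|=\gamma L$, every $g:T\to\{0,1\}$ and every $S$ distinct keys $k_1,\ldots,k_S$, $$\min_{1\le i\le S}\bigl|\{j\in T: g(j)=a_j(k_i)\}\bigr|\le n_{\rm correct}(\gamma,\varepsilon):=\nu^*_{\rm correct}L',$$ with $\varepsilon=S/|\mathcal K|$. Consequently, fewer than $S$ keys $k$ satisfy $|\{j\in T:g(j)=a_j(k)\}|>\nu^*_{\rm correct}L'$, so for a uniformly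 random key the number of correctly guessed bits does not exceed $\nu^*_{\rm correct}L'$ with probability at least $1-\varepsilon$.
   Context: $\mathbb Z_L=\{0,\ldots,L-1\}$ is the residue ring modulo $L$. For distinct keys $k_1,\ldots,k_s$ and bits $b_1,\ldots,b_s$, $A_{b_1\ldots b_s}(k_1,\ldots,k_s)=\{i\in\mathbb Z_L: a_i(k_1)=b_1,\ldots,a_i(k_s)=b_s\}$. *)

theory Defs
  imports Complex_Main
begin

text \<open>Sequences: a k i is the bit a_i(k) for key k and index i in Z_L = {0..<L}.
  Bits are booleans.  A_{b_1..b_s}(k_1..k_s), keys and bits indexed by 0..s-1.\<close>
definition A_set :: "nat \<Rightarrow> (nat \<Rightarrow> nat \<Rightarrow> bool) \<Rightarrow> nat \<Rightarrow> (nat \<Rightarrow> nat) \<Rightarrow> (nat \<Rightarrow> bool) \<Rightarrow> nat set" where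
  "A_set L a s ks bs = {i. i < L \<and> (\<forall>j<s. a (ks j) i = bs j)}"

definition lp_feasible :: "nat \<Rightarrow> nat \<Rightarrow> real \<Rightarrow> (nat \<Rightarrow> real) \<Rightarrow> bool" where
  "lp_feasible S s gam' nu \<longleftrightarrow>
     (\<forall>t\<le>S. nu t \<ge> 0) \<and>
     (\<forall>t\<le>S. nu t = nu (S - t)) \<and>
     (\<Sum>t=0..S. real (S choose t) * nu t) = gam' \<and>
     (\<forall>h\<le>s. (\<Sum>t=0..S-s. real ((S - s) choose t) * nu (h + t)) \<le> 1 / 2 ^ s)"

definition lp_objective :: "nat \<Rightarrow> (nat \<Rightarrow> real) \<Rightarrow> real" where
  "lp_objective S nu =
     (\<Sum>t=0..S div 2. real ((S - 1) choose t) * nu t) +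
     (\<Sum>t=S div 2 + 1..S. real ((S - 1) choose (t - 1)) * nu t)"

text \<open>Optimal value nu*_correct of the LP (supremum of the objective over the feasible set;
  the LP is feasible and bounded, so this is the optimum).\<close>
definition nu_correct :: "nat \<Rightarrow> nat \<Rightarrow> real \<Rightarrow> real" where
  "nu_correct S s gam' = Sup (lp_objective S ` {nu. lp_feasible S s gam' nu})"

definition n_agree :: "(nat \<Rightarrow> nat \<Rightarrow> bool) \<Rightarrow> nat set \<Rightarrow> (nat \<Rightarrow> bool) \<Rightarrow> nat \<Rightarrow> nat" where
  "n_agree a T g k = card {j \<in> T. g j = a k j}"

end

theory Submission
  imports Defs
begin


lemma trinom: "(N choose a) * ((N - a) choose b) = (N choose b) * ((N - b) choose a)" for N a b :: nat
proof (cases "a + b \<le> N")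
  case True
  have 1: "(N choose (a+b)) * ((a+b) choose a) = (N choose a) * ((N - a) choose b)"
    using choose_mult[of a "a+b" N] True by simp
  have 2: "(N choose (a+b)) * ((a+b) choose b) = (N choose b) * ((N - b) choose a)"
    using choose_mult[of b "a+b" N] True by simp
  have "((a+b) choose a) = ((a+b) choose b)"
    using binomial_symmetric[of a "a+b"] by simp
  then show ?thesis using 1 2 by simp
next
  case False
  show ?thesis
  proof (cases "a \<le> N \<and> b \<le> N")
    case True
    then have "N - a < b" "N - b < a" using False by linarith+
    then show ?thesis by (simp add: binomial_eq_0)
  next
    case F2: False
    then show ?thesis
    proof (cases "a \<le> N")
      case True
      then have "N < b" "N - a < b" using F2 by linarith+
      then show ?thesis by (simp add: binomial_eq_0)
    next
      case False
      then have "N < a" "N - b < a" by linarith+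
      then show ?thesis by (simp add: binomial_eq_0)
    qed
  qed
qed

lemma binom_ident:
  assumes "h \<le> s" "s \<le> S" "w \<le> S"
  shows "(if h \<le> w \<and> w - h \<le> S - s then (S - s) choose (w - h) else 0) * (S choose s) * (s choose h)
       = (w choose h) * ((S - w) choose (s - h)) * (S choose w)"
proof (cases "h \<le> w")
  case hw: True
  show ?thesis
  proof (cases "w - h \<le> S - s")
    case True
    define N where "N = S - h"
    have a1: "(S choose s) * (s choose h) = (S choose h) * (N choose (s - h))"
      using choose_mult[of h s S] assms unfolding N_def by simp
    have a2: "(S choose w) * (w choose h) = (S choose h) * (N choose (w - h))"
      using choose_mult[of h w S] assms hw unfolding N_def by simp
    have t: "(N choose (w-h)) * ((N - (w-h)) choose (s-h)) = (N choose (s-h)) * ((N - (s-h)) choose (w-h))"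
      by (rule trinom)
    have e1: "N - (w-h) = S - w" "N - (s-h) = S - s" using assms hw unfolding N_def by auto
    show ?thesis using True hw a1 a2 t e1
      by (simp add: algebra_simps) (metis mult.assoc mult.commute)
  next
    case False
    then have "S - w < s - h" using assms hw by auto
    then show ?thesis using False by simp
  qed
next
  case False
  then show ?thesis by simp
qed

lemma count_subsets:
  assumes "finite U" "Z \<subseteq> U" "h \<le> s"
  shows "card {P. P \<subseteq> U \<and> card P = s \<and> card (P \<inter> Z) = h}
       = (card Z choose h) * ((card U - card Z) choose (s - h))"
proof -
  let ?A = "{P. P \<subseteq> U \<and> card P = s \<and> card (P \<inter> Z) = h}"
  let ?B = "{X. X \<subseteq> Z \<and> card X = h} \<times> {Y. Y \<subseteq> U - Z \<and> card Y = s - h}"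
  have fO: "finite Z" using assms finite_subset by blast
  have bij: "bij_betw (\<lambda>P. (P \<inter> Z, P - Z)) ?A ?B"
  proof (rule bij_betw_byWitness[where f' = "\<lambda>(X,Y). X \<union> Y"])
    show "\<forall>a\<in>?A. (case (a \<inter> Z, a - Z) of (X, Y) \<Rightarrow> X \<union> Y) = a" by auto
    show "\<forall>a'\<in>?B. ((case a' of (X, Y) \<Rightarrow> X \<union> Y) \<inter> Z, (case a' of (X, Y) \<Rightarrow> X \<union> Y) - Z) = a'"
      by auto
    show "(\<lambda>P. (P \<inter> Z, P - Z)) ` ?A \<subseteq> ?B"
    proof (rule image_subsetI)
      fix P assume "P \<in> ?A"
      then have P: "P \<subseteq> U" "h = card (P \<inter> Z)" "s = card P" by auto
      have "finite P" using P assms finite_subset by blast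
      have "card P = card (P \<inter> Z) + card (P - Z)"
        using card_Int_Diff[OF \<open>finite P\<close>, of Z] by simp
      then have "card (P - Z) = s - h" using P by simp
      then show "(P \<inter> Z, P - Z) \<in> ?B" using P by auto
    qed
    show "(\<lambda>(X, Y). X \<union> Y) ` ?B \<subseteq> ?A"
    proof (rule image_subsetI)
      fix XY assume "XY \<in> ?B"
      then obtain X Y where XY: "XY = (X,Y)" and X: "X \<subseteq> Z" "h = card X" "Y \<subseteq> U - Z" "card Y = s - card X" by auto
      have fX: "finite X" using X fO finite_subset by blast
      have fY: "finite Y" using X assms finite_subset by blast
      have d: "X \<inter> Y = {}" using X by blast
      have "(X \<union> Y) \<inter> Z = X" using X by blast
      then show "(\<lambda>(X, Y). X \<union> Y) XY \<in> ?A"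
        using X XY assms card_Un_disjoint[OF fX fY d] by auto
    qed
  qed
  have "card ?A = card ?B" using bij_betw_same_card[OF bij] .
  also have "\<dots> = (card Z choose h) * (card (U - Z) choose (s - h))"
    using n_subsets[OF fO] n_subsets[of "U - Z"] assms by (simp add: card_cartesian_product)
  also have "card (U - Z) = card U - card Z" using assms fO by (simp add: card_Diff_subset)
  finally show ?thesis .
qed



definition cc :: "nat \<Rightarrow> nat \<Rightarrow> nat" where
  "cc S t = (if t \<le> S div 2 then (S - 1) choose t else (S - 1) choose (t - 1))"

lemma obj_split: "lp_objective S nu = (\<Sum>t=0..S. real (cc S t) * nu t)"
proof -
  have u: "{0..S} = {0..S div 2} \<union> {S div 2 + 1..S}" by auto
  have d: "{0..S div 2} \<inter> {S div 2 + 1..S} = {}" by auto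
  have "(\<Sum>t=0..S. real (cc S t) * nu t) = (\<Sum>t=0..S div 2. real (cc S t) * nu t) + (\<Sum>t=S div 2 + 1..S. real (cc S t) * nu t)"
    by (subst u, rule sum.union_disjoint) (use d in auto)
  also have "(\<Sum>t=0..S div 2. real (cc S t) * nu t) = (\<Sum>t=0..S div 2. real ((S - 1) choose t) * nu t)"
    by (rule sum.cong) (auto simp: cc_def)
  also have "(\<Sum>t=S div 2 + 1..S. real (cc S t) * nu t) = (\<Sum>t=S div 2 + 1..S. real ((S - 1) choose (t - 1)) * nu t)"
    by (rule sum.cong) (auto simp: cc_def)
  finally show ?thesis unfolding lp_objective_def by simp
qed

lemma cc_mult: "t \<le> S \<Longrightarrow> cc S t * S = (S choose t) * max t (S - t)"
proof (cases "t \<le> S div 2")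
  case True
  then have "max t (S - t) = S - t" by auto
  then show ?thesis using True binomial_absorb_comp[of S t] by (simp add: cc_def mult.commute)
next
  case False
  then have t1: "t = Suc (t - 1)" and m: "max t (S - t) = t" by auto
  have "Suc (t - 1) * (S choose Suc (t - 1)) = S * ((S - 1) choose (t - 1))"
    by (rule binomial_absorption)
  then show ?thesis using False m t1 by (simp add: cc_def mult.commute)
qed

lemma cc_le: assumes t: "t \<le> S" shows "cc S t \<le> S choose t"
proof (cases "S = 0")
  case True
  then show ?thesis using t by (simp add: cc_def)
next
  case False
  have "cc S t * S \<le> (S choose t) * S" using cc_mult[OF t] by simp
  then show ?thesis using False by simp
qed

lemma sum_card_swap:
  assumes "finite A" "finite B"
  shows "(\<Sum>x\<in>A. card {y\<in>B. R x y}) = (\<Sum>y\<in>B. card {x\<in>A. R x y})"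
proof -
  have c: "\<And>C Q. finite C \<Longrightarrow> card {z\<in>C. Q z} = (\<Sum>z\<in>C. if Q z then 1 else 0)"
    by (simp add: sum.inter_filter[symmetric])
  show ?thesis using assms by (simp add: c sum.swap[of _ A])
qed

lemma phi:
  assumes "h \<le> s" "s \<le> S" "w \<le> S"
  shows "(\<Sum>t=0..S-s. real ((S-s) choose t) * (if w = h + t then 1 else 0) / real (S choose (h + t)))
       = real ((w choose h) * ((S - w) choose (s - h))) / (real (S choose s) * real (s choose h))"
proof -
  have "(\<Sum>t=0..S-s. real ((S-s) choose t) * (if w = h + t then 1 else 0) / real (S choose (h + t)))
      = (\<Sum>t=0..S-s. if t = w - h then (if h \<le> w then real ((S-s) choose (w - h)) / real (S choose w) else 0) else 0)"
    by (rule sum.cong) auto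
  also have "\<dots> = (if h \<le> w \<and> w - h \<le> S - s then real ((S-s) choose (w - h)) / real (S choose w) else 0)"
    by (simp add: sum.delta)
  also have "\<dots> = real (if h \<le> w \<and> w - h \<le> S - s then (S - s) choose (w - h) else 0) / real (S choose w)"
    by simp
  also have "\<dots> = real ((w choose h) * ((S - w) choose (s - h))) / (real (S choose s) * real (s choose h))"
  proof -
    have p1: "real (S choose w) > 0" "real (S choose s) > 0" "real (s choose h) > 0"
      using assms by auto
    have "real (if h \<le> w \<and> w - h \<le> S - s then (S - s) choose (w - h) else 0) * real (S choose s) * real (s choose h)
        = real ((w choose h) * ((S - w) choose (s - h))) * real (S choose w)"
      using arg_cong[OF binom_ident[OF assms], of real] by simp
    then show ?thesis using p1 by (simp add: field_simps)
  qed
  finally show ?thesis .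
qed



lemma per_P:
  fixes S s L h :: nat and ks :: "nat \<Rightarrow> nat" and a :: "nat \<Rightarrow> nat \<Rightarrow> bool" and T P :: "nat set" and W :: real
  assumes bound: "\<And>kk bs. inj_on kk {..<s} \<Longrightarrow> (\<forall>j<s. kk j < L) \<Longrightarrow>
                  real (card (A_set L a s kk bs)) \<le> real L / 2 ^ s + W"
    and T: "T \<subseteq> {..<L}" and ks: "inj_on ks {..<S}" "\<forall>i<S. ks i < L"
    and P: "P \<subseteq> {..<S}" "card P = s"
  shows "real (card {j\<in>T. card (P \<inter> {i\<in>{..<S}. a (ks i) j}) = h}) \<le> real (s choose h) * (real L / 2 ^ s + W)"
proof -
  let ?O = "\<lambda>j. {i\<in>{..<S}. a (ks i) j}"
  let ?Bs = "{b. b \<subseteq> P \<and> card b = h}"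
  have fP: "finite P" by (rule finite_subset[OF P(1)]) simp
  have fT: "finite T" by (rule finite_subset[OF T]) simp
  have fBs: "finite ?Bs" by (rule finite_subset[of _ "Pow P"]) (auto simp: fP)
  have each: "real (card {j\<in>T. P \<inter> ?O j = b}) \<le> real L / 2 ^ s + W" for b
  proof -
    obtain f where f: "bij_betw f {0..<card P} P" using ex_bij_betw_nat_finite[OF fP] by blast
    then have f': "bij_betw f {..<s} P" using P by (simp add: atLeast0LessThan)
    define kk where "kk = ks \<circ> f"
    define bs where "bs = (\<lambda>l. f l \<in> b)"
    have fi: "inj_on f {..<s}" and fim: "f ` {..<s} = P" using f' by (auto simp: bij_betw_def)
    have "inj_on ks P" by (rule inj_on_subset[OF ks(1) P(1)])
    then have inj: "inj_on kk {..<s}" unfolding kk_def using fi fim by (simp add: comp_inj_on)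
    have lt: "\<forall>j<s. kk j < L"
    proof (intro allI impI)
      fix l assume "l < s"
      then have "f l \<in> P" using fim by blast
      then have "f l < S" using P by blast
      then show "kk l < L" unfolding kk_def using ks(2) by simp
    qed
    have sub: "{j\<in>T. P \<inter> ?O j = b} \<subseteq> A_set L a s kk bs"
    proof
      fix j assume j: "j \<in> {j\<in>T. P \<inter> ?O j = b}"
      have "\<forall>l<s. a (kk l) j = bs l"
      proof (intro allI impI)
        fix l assume l: "l < s"
        have fl: "f l \<in> P" using fim l by blast
        then have "f l < S" using P by blast
        have "P \<inter> ?O j = b" using j by simp
        moreover have "(f l \<in> P \<inter> ?O j) = a (ks (f l)) j" using fl \<open>f l < S\<close> by simp
        ultimately have "(f l \<in> b) = a (ks (f l)) j" by simp
        then show "a (kk l) j = bs l" unfolding kk_def bs_def by simp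
      qed
      moreover have "j < L" using j T by blast
      ultimately show "j \<in> A_set L a s kk bs" unfolding A_set_def by simp
    qed
    have "card {j\<in>T. P \<inter> ?O j = b} \<le> card (A_set L a s kk bs)"
    proof (rule card_mono[OF _ sub])
      show "finite (A_set L a s kk bs)" unfolding A_set_def by (rule finite_subset[of _ "{..<L}"]) auto
    qed
    then show ?thesis using bound[OF inj lt, of bs] by linarith
  qed
  have sub: "{j\<in>T. card (P \<inter> ?O j) = h} \<subseteq> (\<Union>b\<in>?Bs. {j\<in>T. P \<inter> ?O j = b})"
  proof
    fix j assume j: "j \<in> {j\<in>T. card (P \<inter> ?O j) = h}"
    have "P \<inter> ?O j \<in> ?Bs" using j by simp
    moreover have "j \<in> {j'\<in>T. P \<inter> ?O j' = P \<inter> ?O j}" using j by simp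
    ultimately show "j \<in> (\<Union>b\<in>?Bs. {j\<in>T. P \<inter> ?O j = b})" by (rule UN_I)
  qed
  have fU: "finite (\<Union>b\<in>?Bs. {j\<in>T. P \<inter> ?O j = b})"
    by (rule finite_subset[OF _ fT]) (rule UN_least, rule subsetI, simp)
  have "card {j\<in>T. card (P \<inter> ?O j) = h} \<le> card (\<Union>b\<in>?Bs. {j\<in>T. P \<inter> ?O j = b})"
    by (rule card_mono[OF fU sub])
  also have "\<dots> \<le> (\<Sum>b\<in>?Bs. card {j\<in>T. P \<inter> ?O j = b})" by (rule card_UN_le[OF fBs])
  finally have "real (card {j\<in>T. card (P \<inter> ?O j) = h}) \<le> real (\<Sum>b\<in>?Bs. card {j\<in>T. P \<inter> ?O j = b})"
    by (rule of_nat_mono)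
  also have "\<dots> = (\<Sum>b\<in>?Bs. real (card {j\<in>T. P \<inter> ?O j = b}))" by (rule of_nat_sum)
  also have "\<dots> \<le> (\<Sum>b\<in>?Bs. real L / 2 ^ s + W)" by (rule sum_mono) (rule each)
  also have "\<dots> = real (s choose h) * (real L / 2 ^ s + W)"
  proof -
    have cB: "card ?Bs = s choose h" using n_subsets[OF fP, of h] P by simp
    show ?thesis by (simp add: cB)
  qed
  finally show ?thesis .
qed

lemma bound_B:
  fixes S s L h :: nat and ks :: "nat \<Rightarrow> nat" and a :: "nat \<Rightarrow> nat \<Rightarrow> bool" and T :: "nat set" and W :: real
  assumes bound: "\<And>kk bs. inj_on kk {..<s} \<Longrightarrow> (\<forall>j<s. kk j < L) \<Longrightarrow>
                  real (card (A_set L a s kk bs)) \<le> real L / 2 ^ s + W"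
    and T: "T \<subseteq> {..<L}" and ks: "inj_on ks {..<S}" "\<forall>i<S. ks i < L"
    and h: "h \<le> s" and sS: "s \<le> S"
  shows "real (\<Sum>j\<in>T. (card {i\<in>{..<S}. a (ks i) j} choose h) * ((S - card {i\<in>{..<S}. a (ks i) j}) choose (s - h)))
      \<le> real (S choose s) * real (s choose h) * (real L / 2 ^ s + W)"
proof -
  let ?O = "\<lambda>j. {i\<in>{..<S}. a (ks i) j}"
  let ?Ps = "{P. P \<subseteq> {..<S} \<and> card P = s}"
  have fT: "finite T" using T finite_subset by blast
  have fPs: "finite ?Ps" by (rule finite_subset[of _ "Pow {..<S}"]) auto
  have "(\<Sum>j\<in>T. (card (?O j) choose h) * ((S - card (?O j)) choose (s - h)))
      = (\<Sum>j\<in>T. card {P\<in>?Ps. card (P \<inter> ?O j) = h})"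
  proof (rule sum.cong[OF refl])
    fix j
    have "card {P. P \<subseteq> {..<S} \<and> card P = s \<and> card (P \<inter> ?O j) = h}
        = (card (?O j) choose h) * ((card {..<S} - card (?O j)) choose (s - h))"
      by (rule count_subsets) (use h in auto)
    moreover have "{P\<in>?Ps. card (P \<inter> ?O j) = h} = {P. P \<subseteq> {..<S} \<and> card P = s \<and> card (P \<inter> ?O j) = h}"
      by auto
    ultimately show "(card (?O j) choose h) * ((S - card (?O j)) choose (s - h)) = card {P\<in>?Ps. card (P \<inter> ?O j) = h}"
      by simp
  qed
  also have "\<dots> = (\<Sum>P\<in>?Ps. card {j\<in>T. card (P \<inter> ?O j) = h})"
    by (rule sum_card_swap[OF fT fPs])
  finally have "real (\<Sum>j\<in>T. (card (?O j) choose h) * ((S - card (?O j)) choose (s - h)))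
      = (\<Sum>P\<in>?Ps. real (card {j\<in>T. card (P \<inter> ?O j) = h}))" by simp
  also have "\<dots> \<le> (\<Sum>P\<in>?Ps. real (s choose h) * (real L / 2 ^ s + W))"
    by (rule sum_mono) (rule per_P[OF bound T ks], auto)
  also have "\<dots> = real (S choose s) * real (s choose h) * (real L / 2 ^ s + W)"
    using n_subsets[of "{..<S}" s] by simp
  finally show ?thesis .
qed



lemma part1:
  fixes S s L :: nat and ks :: "nat \<Rightarrow> nat" and a :: "nat \<Rightarrow> nat \<Rightarrow> bool" and T :: "nat set"
    and g :: "nat \<Rightarrow> bool" and W :: real
  assumes L_pos: "0 < L" and s_ge: "2 \<le> s" and s_le: "s \<le> S" and W_nonneg: "0 \<le> W"
    and bound: "\<And>kk bs. inj_on kk {..<s} \<Longrightarrow> (\<forall>j<s. kk j < L) \<Longrightarrow>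
                  real (card (A_set L a s kk bs)) \<le> real L / 2 ^ s + W"
    and T: "T \<subseteq> {..<L}" and ks: "inj_on ks {..<S}" "\<forall>i<S. ks i < L"
  shows "real (Min (n_agree a T g ` ks ` {..<S}))
     \<le> nu_correct S s (real (card T) / (real L + 2 ^ s * W)) * (real L + 2 ^ s * W)"
proof -
  define L' where "L' = real L + 2 ^ s * W"
  have L'pos: "L' > 0" unfolding L'_def using L_pos W_nonneg by (simp add: add_pos_nonneg)
  have L'eq: "real L / 2 ^ s + W = L' / 2 ^ s" by (simp add: L'_def field_simps)
  define w where "w j = card {i\<in>{..<S}. a (ks i) j}" for j
  have wS: "w j \<le> S" for j
  proof -
    have "card {i\<in>{..<S}. a (ks i) j} \<le> card {..<S}" by (rule card_mono) auto
    then show ?thesis unfolding w_def by simp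
  qed
  have Spos: "S > 0" using s_ge s_le by simp
  have fT: "finite T" by (rule finite_subset[OF T]) simp
  define X where "X j u = (if w j = u then 1 else 0) + (if S - w j = u then 1 else (0::real))" for j u
  define nu where "nu u = (\<Sum>j\<in>T. X j u) / (2 * L' * real (S choose u))" for u
  have Xnn: "X j u \<ge> 0" for j u unfolding X_def by simp
  have nonneg: "\<forall>t\<le>S. nu t \<ge> 0"
    unfolding nu_def using L'pos Xnn by (auto intro!: divide_nonneg_nonneg sum_nonneg)
  have symm: "\<forall>t\<le>S. nu t = nu (S - t)"
  proof (intro allI impI)
    fix t assume t: "t \<le> S"
    have "X j (S - t) = X j t" for j
      using wS[of j] t unfolding X_def by auto
    moreover have "S choose (S - t) = S choose t" using binomial_symmetric[OF t] by simp
    ultimately show "nu t = nu (S - t)" unfolding nu_def by simp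
  qed
  have sumX: "(\<Sum>t=0..S. X j t) = 2" for j
  proof -
    have "(\<Sum>t=0..S. X j t) = (\<Sum>t=0..S. if w j = t then 1 else 0) + (\<Sum>t=0..S. if S - w j = t then 1 else (0::real))"
      unfolding X_def by (rule sum.distrib)
    also have "\<dots> = 2" using wS[of j] by (simp add: sum.delta)
    finally show ?thesis .
  qed
  have tot: "(\<Sum>t=0..S. real (S choose t) * nu t) = real (card T) / L'"
  proof -
    have "(\<Sum>t=0..S. real (S choose t) * nu t) = (\<Sum>t=0..S. (\<Sum>j\<in>T. X j t) / (2 * L'))"
    proof (rule sum.cong[OF refl])
      fix t assume "t \<in> {0..S}"
      then have "real (S choose t) > 0" by simp
      then show "real (S choose t) * nu t = (\<Sum>j\<in>T. X j t) / (2 * L')"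
        unfolding nu_def using L'pos by (simp add: field_simps)
    qed
    also have "\<dots> = (\<Sum>t=0..S. \<Sum>j\<in>T. X j t) / (2 * L')"
      by (rule sum_divide_distrib[symmetric])
    also have "\<dots> = (\<Sum>j\<in>T. \<Sum>t=0..S. X j t) / (2 * L')"
      by (subst sum.swap) (rule refl)
    also have "\<dots> = real (card T) / L'" using sumX by simp
    finally show ?thesis .
  qed
  have constr: "\<forall>h\<le>s. (\<Sum>t=0..S-s. real ((S - s) choose t) * nu (h + t)) \<le> 1 / 2 ^ s"
  proof (intro allI impI)
    fix h assume h: "h \<le> s"
    define D where "D = real (S choose s) * real (s choose h)"
    have Dpos: "D > 0" unfolding D_def using h s_le by simp
    define F1 where "F1 j = (\<Sum>t=0..S-s. real ((S-s) choose t) * (if w j = h + t then 1 else 0) / real (S choose (h + t)))" for j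
    define F2 where "F2 j = (\<Sum>t=0..S-s. real ((S-s) choose t) * (if S - w j = h + t then 1 else 0) / real (S choose (h + t)))" for j
    have "(\<Sum>t=0..S-s. real ((S - s) choose t) * nu (h + t))
        = (\<Sum>t=0..S-s. (\<Sum>j\<in>T. real ((S-s) choose t) * X j (h + t) / real (S choose (h + t))) / (2 * L'))"
    proof (rule sum.cong[OF refl])
      fix t assume "t \<in> {0..S-s}"
      then have "real (S choose (h + t)) > 0" using h s_le by simp
      then show "real ((S - s) choose t) * nu (h + t) = (\<Sum>j\<in>T. real ((S-s) choose t) * X j (h + t) / real (S choose (h + t))) / (2 * L')"
        unfolding nu_def using L'pos
        by (simp add: sum_distrib_left sum_divide_distrib[symmetric] field_simps)
    qed
    also have "\<dots> = (\<Sum>t=0..S-s. \<Sum>j\<in>T. real ((S-s) choose t) * X j (h + t) / real (S choose (h + t))) / (2 * L')"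
      by (rule sum_divide_distrib[symmetric])
    also have "\<dots> = (\<Sum>j\<in>T. \<Sum>t=0..S-s. real ((S-s) choose t) * X j (h + t) / real (S choose (h + t))) / (2 * L')"
      by (subst sum.swap) (rule refl)
    also have "\<dots> = (\<Sum>j\<in>T. F1 j + F2 j) / (2 * L')"
    proof -
      have "(\<Sum>t=0..S-s. real ((S-s) choose t) * X j (h + t) / real (S choose (h + t))) = F1 j + F2 j" for j
        unfolding F1_def F2_def X_def by (simp add: sum.distrib[symmetric] ring_distribs add_divide_distrib)
      then show ?thesis by simp
    qed
    also have "\<dots> = ((\<Sum>j\<in>T. F1 j) + (\<Sum>j\<in>T. F2 j)) / (2 * L')" by (simp add: sum.distrib)
    also have "\<dots> \<le> (L' / 2 ^ s + L' / 2 ^ s) / (2 * L')"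
    proof -
      have e1: "F1 j = real ((w j choose h) * ((S - w j) choose (s - h))) / D" for j
        unfolding F1_def D_def by (rule phi[OF h s_le wS])
      have "(\<Sum>j\<in>T. F1 j) = real (\<Sum>j\<in>T. (w j choose h) * ((S - w j) choose (s - h))) / D"
        by (simp add: e1 sum_divide_distrib)
      also have "\<dots> \<le> L' / 2 ^ s"
        using bound_B[OF bound T ks h s_le] Dpos unfolding w_def D_def L'eq
        by (simp add: divide_le_eq mult.commute)
      finally have b1: "(\<Sum>j\<in>T. F1 j) \<le> L' / 2 ^ s" .
      have e2: "F2 j = real ((w j choose (s - h)) * ((S - w j) choose (s - (s - h)))) / (real (S choose s) * real (s choose (s - h)))" for j
      proof -
        have "F2 j = real (((S - w j) choose h) * ((S - (S - w j)) choose (s - h))) / D"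
          unfolding F2_def D_def by (rule phi[OF h s_le]) simp
        moreover have "S - (S - w j) = w j" using wS[of j] by simp
        moreover have "s - (s - h) = h" using h by simp
        moreover have "s choose (s - h) = s choose h" using binomial_symmetric[OF h] by simp
        ultimately show ?thesis unfolding D_def by (simp add: mult.commute)
      qed
      have "(\<Sum>j\<in>T. F2 j) = real (\<Sum>j\<in>T. (w j choose (s - h)) * ((S - w j) choose (s - (s - h)))) / (real (S choose s) * real (s choose (s - h)))"
        by (simp add: e2 sum_divide_distrib)
      also have "\<dots> \<le> L' / 2 ^ s"
      proof -
        have D2: "real (S choose s) * real (s choose (s - h)) > 0" using s_le by simp
        show ?thesis
          using bound_B[OF bound T ks _ s_le, of "s - h"] D2 unfolding w_def L'eq
          by (simp add: divide_le_eq mult.commute)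
      qed
      finally have b2: "(\<Sum>j\<in>T. F2 j) \<le> L' / 2 ^ s" .
      have "(\<Sum>j\<in>T. F1 j) + (\<Sum>j\<in>T. F2 j) \<le> L' / 2 ^ s + L' / 2 ^ s" using b1 b2 by linarith
      then show ?thesis by (rule divide_right_mono) (use L'pos in simp)
    qed
    also have "\<dots> = 1 / 2 ^ s" using L'pos by (simp add: field_simps)
    finally show "(\<Sum>t=0..S-s. real ((S - s) choose t) * nu (h + t)) \<le> 1 / 2 ^ s" .
  qed
  have feas: "lp_feasible S s (real (card T) / L') nu"
    unfolding lp_feasible_def using nonneg symm tot constr by blast
  have obj: "lp_objective S nu = (\<Sum>j\<in>T. real (max (w j) (S - w j))) / (real S * L')"
  proof -
    define m where "m t = real (max t (S - t))" for t
    have "lp_objective S nu = (\<Sum>t=0..S. real (cc S t) * nu t)" by (rule obj_split)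
    also have "\<dots> = (\<Sum>t=0..S. (\<Sum>j\<in>T. X j t * m t) / (2 * L' * real S))"
    proof (rule sum.cong[OF refl])
      fix t assume "t \<in> {0..S}"
      then have t: "t \<le> S" by simp
      have Cp: "real (S choose t) > 0" using t by simp
      have "real (cc S t) * real S = real (S choose t) * m t"
        unfolding m_def using arg_cong[OF cc_mult[OF t], of real] by simp
      then have cc: "real (cc S t) = real (S choose t) * m t / real S" using Spos by (simp add: field_simps)
      show "real (cc S t) * nu t = (\<Sum>j\<in>T. X j t * m t) / (2 * L' * real S)"
        unfolding cc nu_def using Cp L'pos Spos by (simp add: field_simps sum_distrib_left)
    qed
    also have "\<dots> = (\<Sum>t=0..S. \<Sum>j\<in>T. X j t * m t) / (2 * L' * real S)"
      by (rule sum_divide_distrib[symmetric])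
    also have "\<dots> = (\<Sum>j\<in>T. \<Sum>t=0..S. X j t * m t) / (2 * L' * real S)"
      by (subst sum.swap) (rule refl)
    also have "\<dots> = (\<Sum>j\<in>T. 2 * real (max (w j) (S - w j))) / (2 * L' * real S)"
    proof -
      have "(\<Sum>t=0..S. X j t * m t) = 2 * real (max (w j) (S - w j))" for j
      proof -
        have "(\<Sum>t=0..S. X j t * m t) = (\<Sum>t=0..S. if w j = t then m t else 0) + (\<Sum>t=0..S. if S - w j = t then m t else 0)"
        proof -
          have "(\<Sum>t=0..S. X j t * m t) = (\<Sum>t=0..S. (if w j = t then m t else 0) + (if S - w j = t then m t else 0))"
            by (rule sum.cong[OF refl]) (simp add: X_def ring_distribs)
          also have "\<dots> = (\<Sum>t=0..S. if w j = t then m t else 0) + (\<Sum>t=0..S. if S - w j = t then m t else 0)"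
            by (rule sum.distrib)
          finally show ?thesis .
        qed
        also have "\<dots> = m (w j) + m (S - w j)" using wS[of j] by (simp add: sum.delta)
        also have "\<dots> = 2 * real (max (w j) (S - w j))" unfolding m_def using wS[of j] by (simp add: max.commute)
        finally show ?thesis .
      qed
      then show ?thesis by simp
    qed
    also have "\<dots> = (\<Sum>j\<in>T. real (max (w j) (S - w j))) / (real S * L')"
      by (simp add: sum_distrib_left[symmetric] mult.commute)
    finally show ?thesis .
  qed
  have bdd: "bdd_above (lp_objective S ` {nu. lp_feasible S s (real (card T) / L') nu})"
  proof (rule bdd_aboveI2)
    fix nu' assume "nu' \<in> {nu. lp_feasible S s (real (card T) / L') nu}"
    then have f: "lp_feasible S s (real (card T) / L') nu'" by simp
    have "lp_objective S nu' = (\<Sum>t=0..S. real (cc S t) * nu' t)" by (rule obj_split)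
    also have "\<dots> \<le> (\<Sum>t=0..S. real (S choose t) * nu' t)"
    proof (rule sum_mono)
      fix t assume "t \<in> {0..S}"
      then have t: "t \<le> S" by simp
      have "\<forall>t\<le>S. nu' t \<ge> 0" using f unfolding lp_feasible_def by blast
      then have "nu' t \<ge> 0" using t by blast
      moreover have "real (cc S t) \<le> real (S choose t)" using cc_le[OF t] by simp
      ultimately show "real (cc S t) * nu' t \<le> real (S choose t) * nu' t" by (simp add: mult_right_mono)
    qed
    also have "\<dots> = real (card T) / L'" using f unfolding lp_feasible_def by blast
    finally show "lp_objective S nu' \<le> real (card T) / L'" .
  qed
  have sup: "lp_objective S nu \<le> nu_correct S s (real (card T) / L')"
    unfolding nu_correct_def by (rule cSup_upper[OF imageI bdd]) (rule CollectI, rule feas)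
  let ?M = "Min (n_agree a T g ` ks ` {..<S})"
  have fin: "finite (n_agree a T g ` ks ` {..<S})" by simp
  have "real S * real ?M = (\<Sum>i\<in>{..<S}. real ?M)" by simp
  also have "\<dots> \<le> (\<Sum>i\<in>{..<S}. real (n_agree a T g (ks i)))"
  proof (rule sum_mono)
    fix i assume "i \<in> {..<S}"
    then have "?M \<le> n_agree a T g (ks i)" using fin by (intro Min_le) auto
    then show "real ?M \<le> real (n_agree a T g (ks i))" by simp
  qed
  also have "\<dots> = real (\<Sum>i\<in>{..<S}. card {j\<in>T. g j = a (ks i) j})" unfolding n_agree_def by simp
  also have "(\<Sum>i\<in>{..<S}. card {j\<in>T. g j = a (ks i) j}) = (\<Sum>j\<in>T. card {i\<in>{..<S}. g j = a (ks i) j})"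
    by (rule sum_card_swap) (use fT in auto)
  also have "real \<dots> \<le> (\<Sum>j\<in>T. real (max (w j) (S - w j)))"
  proof -
    have "card {i\<in>{..<S}. g j = a (ks i) j} \<le> max (w j) (S - w j)" for j
    proof (cases "g j")
      case True
      then show ?thesis unfolding w_def by simp
    next
      case False
      then have "{i\<in>{..<S}. g j = a (ks i) j} = {..<S} - {i\<in>{..<S}. a (ks i) j}" by auto
      moreover have "card ({..<S} - {i\<in>{..<S}. a (ks i) j}) = card {..<S} - card {i\<in>{..<S}. a (ks i) j}"
        by (rule card_Diff_subset) auto
      ultimately have "card {i\<in>{..<S}. g j = a (ks i) j} = S - w j" unfolding w_def by simp
      then show ?thesis by simp
    qed
    then show ?thesis by (simp add: sum_mono flip: of_nat_sum)
  qed
  finally have main: "real S * real ?M \<le> (\<Sum>j\<in>T. real (max (w j) (S - w j)))" .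
  have "real ?M \<le> (\<Sum>j\<in>T. real (max (w j) (S - w j))) / real S"
    using main Spos by (simp add: field_simps)
  also have "\<dots> = lp_objective S nu * L'" unfolding obj using L'pos Spos by (simp add: field_simps)
  also have "\<dots> \<le> nu_correct S s (real (card T) / L') * L'"
    using sup L'pos by (simp add: mult_right_mono)
  finally show ?thesis unfolding L'_def .
qed



theorem corollary2:
  fixes L s S :: nat and a :: "nat \<Rightarrow> nat \<Rightarrow> bool" and W \<gamma> :: real
    and T :: "nat set" and g :: "nat \<Rightarrow> bool" and ks :: "nat \<Rightarrow> nat"
  assumes L_pos: "0 < L"
    and s_ge: "2 \<le> s" and s_le: "s \<le> S"
    and W_nonneg: "0 \<le> W"
    and bound: "\<And>kk bs. inj_on kk {..<s} \<Longrightarrow> (\<forall>j<s. kk j < L) \<Longrightarrow>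
                  real (card (A_set L a s kk bs)) \<le> real L / 2 ^ s + W"
    and gam: "0 < \<gamma>" "\<gamma> < 1" "\<gamma> * real L \<in> \<int>"
    and T: "T \<subseteq> {..<L}" "real (card T) = \<gamma> * real L"
    and ks: "inj_on ks {..<S}" "\<forall>i<S. ks i < L"
  shows "let L' = real L + 2 ^ s * W; \<gamma>' = \<gamma> * real L / L'; \<epsilon> = real S / real L;
             n = nu_correct S s \<gamma>' * L' in
           real (Min (n_agree a T g ` ks ` {..<S})) \<le> n \<and>
           card {k. k < L \<and> real (n_agree a T g k) > n} < S \<and>
           real (card {k. k < L \<and> real (n_agree a T g k) \<le> n}) / real L \<ge> 1 - \<epsilon>"
proof -
  define L' where "L' = real L + 2 ^ s * W"
  define n where "n = nu_correct S s (\<gamma> * real L / L') * L'"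
  have P1: "real (Min (n_agree a T g ` ks' ` {..<S})) \<le> n"
    if "inj_on ks' {..<S}" "\<forall>i<S. ks' i < L" for ks'
    using part1[OF L_pos s_ge s_le W_nonneg bound T(1) that] T(2) unfolding n_def L'_def by simp
  have Spos: "S > 0" using s_ge s_le by simp
  have c1: "real (Min (n_agree a T g ` ks ` {..<S})) \<le> n" by (rule P1[OF ks])
  define K where "K = {k. k < L \<and> real (n_agree a T g k) > n}"
  define K2 where "K2 = {k. k < L \<and> real (n_agree a T g k) \<le> n}"
  have fK: "finite K" unfolding K_def by (rule finite_subset[of _ "{..<L}"]) auto
  have c2: "card K < S"
  proof (rule ccontr)
    assume "\<not> card K < S"
    then have "card {..<S} \<le> card K" by simp
    then obtain f where f: "f ` {..<S} \<subseteq> K" "inj_on f {..<S}"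
      using card_le_inj[of "{..<S}" K] fK by auto
    have lt: "\<forall>i<S. f i < L" using f(1) unfolding K_def by auto
    have "0 \<in> {..<S}" using Spos by simp
    then have ne: "n_agree a T g ` f ` {..<S} \<noteq> {}" by blast
    have "Min (n_agree a T g ` f ` {..<S}) \<in> n_agree a T g ` f ` {..<S}"
      by (rule Min_in[OF _ ne]) simp
    then obtain i where i: "i < S" "Min (n_agree a T g ` f ` {..<S}) = n_agree a T g (f i)" by auto
    have "f i \<in> K" using f(1) i(1) by auto
    then have "real (n_agree a T g (f i)) > n" unfolding K_def by simp
    moreover have "real (n_agree a T g (f i)) \<le> n" using P1[OF f(2) lt] i(2) by simp
    ultimately show False by simp
  qed
  have un: "K \<union> K2 = {..<L}" unfolding K_def K2_def by auto
  have dj: "K \<inter> K2 = {}" unfolding K_def K2_def by auto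
  have fK2: "finite K2" unfolding K2_def by (rule finite_subset[of _ "{..<L}"]) auto
  have "card K + card K2 = L" using card_Un_disjoint[OF fK fK2 dj] un by simp
  then have "real (card K2) \<ge> real L - real S" using c2 by linarith
  then have "(real L - real S) / real L \<le> real (card K2) / real L"
    by (rule divide_right_mono) simp
  moreover have "1 - real S / real L = (real L - real S) / real L" using L_pos by (simp add: field_simps)
  ultimately have c3: "real (card K2) / real L \<ge> 1 - real S / real L" by simp
  show ?thesis unfolding Let_def L'_def[symmetric] n_def[symmetric] K_def[symmetric] K2_def[symmetric]
    using c1 c2 c3 by simp
qed


end
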